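(* Let $A,E\in M_n(\mathbb{FT})$ with $E$ idempotent, and let $\{c_1,\dots,c_k\}$ be a set of representatives of the critical classes of $E$. (i) If $A\le_{\mathcal R}E$, then the rows of $A$ indexed by $c_1,\dots,c_k$ form a generating set for $R(A)$; if moreover $A\,\mathcal{R}\,E$, this generating set is minimal. (ii) If $A\le_{\mathcal L}E$, then the columns of $A$ indexed by $c_1,\dots,c_k$ form a generating set for $C(A)$; if moreover $A\,\mathcal{L}\,E$, this generating set is minimal.
   Context: $\mathbb{FT}$ is $\mathbb{R}$ with $a\oplus b=\max(a,b)$, $a\otimes b=a+b$; $M_n(\mathbb{FT})$ is the semigroup of real $n\times n$ matrices under $(A\otimes B)_{i,j}=\max_k(A_{i,k}+B_{k,j})$. $C(A)$, $R(A)\subseteq\mathbb{R}^n$ are the sets of finite componentwise maxima of real shifts of columns, resp. rows, of $A$; generating sets are with respect to componentwise max and adding real constants. For a semigroup $S$ ($S^1$ = $S$ with identity adjoined if needed): $a\le_{\mathcal R}b$ iff $aS^1\subseteq bS^1$, $a\le_{\mathcal L}b$ iff $S^1a\subseteq S^1b$, $a\,\mathcal R\,b$ iff $aS^1=bS^1$, $a\,\mathcal L\,b$ iff $S^1a=S^1b$. $\Gamma_E$ is the complete weighted digraph on $\{1,\dots,n\}$ with edge $j\to i$ of weight $E_{i,j}$; the maximum cycle mean is the maximum arithmetic mean of edge weights over closed paths; the critical graph consists of all nodes and edges on closed paths attaining the maximum cycle mean; the critical classes are its strongly connected components. *)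

theory Defs
  imports Main "HOL-Library.Library"
begin

text \<open>Max-plus (finite tropical) n x n matrices, indexed by a finite type 'n.\<close>

type_synonym 'n tmat = "'n \<Rightarrow> 'n \<Rightarrow> real"

definition tmul :: "('n::finite) tmat \<Rightarrow> 'n tmat \<Rightarrow> 'n tmat" (infixl "\<otimes>\<^sub>t" 70) where
  "tmul A B = (\<lambda>i j. Max (range (\<lambda>k. A i k + B k j)))"

definition idempotent_t :: "('n::finite) tmat \<Rightarrow> bool" where
  "idempotent_t E \<longleftrightarrow> E \<otimes>\<^sub>t E = E"

text \<open>Principal one-sided ideals in S^1 (S = M_n(FT) has no identity, so one is adjoined).\<close>
definition right_ideal1 :: "('n::finite) tmat \<Rightarrow> 'n tmat set" where
  "right_ideal1 A = insert A {A \<otimes>\<^sub>t X | X. True}"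

definition left_ideal1 :: "('n::finite) tmat \<Rightarrow> 'n tmat set" where
  "left_ideal1 A = insert A {X \<otimes>\<^sub>t A | X. True}"

definition le_R :: "('n::finite) tmat \<Rightarrow> 'n tmat \<Rightarrow> bool" where
  "le_R A B \<longleftrightarrow> right_ideal1 A \<subseteq> right_ideal1 B"

definition le_L :: "('n::finite) tmat \<Rightarrow> 'n tmat \<Rightarrow> bool" where
  "le_L A B \<longleftrightarrow> left_ideal1 A \<subseteq> left_ideal1 B"

definition Rrel :: "('n::finite) tmat \<Rightarrow> 'n tmat \<Rightarrow> bool" where
  "Rrel A B \<longleftrightarrow> right_ideal1 A = right_ideal1 B"

definition Lrel :: "('n::finite) tmat \<Rightarrow> 'n tmat \<Rightarrow> bool" where
  "Lrel A B \<longleftrightarrow> left_ideal1 A = left_ideal1 B"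

definition tspan :: "('n \<Rightarrow> real) set \<Rightarrow> ('n \<Rightarrow> real) set" where
  "tspan G = {x. \<exists>F. finite F \<and> F \<noteq> {} \<and> F \<subseteq> G \<times> UNIV \<and>
                   x = (\<lambda>k. Max ((\<lambda>(v, c). v k + c) ` F))}"

definition row :: "'n tmat \<Rightarrow> 'n \<Rightarrow> ('n \<Rightarrow> real)" where
  "row A i = (\<lambda>j. A i j)"

definition col :: "'n tmat \<Rightarrow> 'n \<Rightarrow> ('n \<Rightarrow> real)" where
  "col A j = (\<lambda>i. A i j)"

definition row_space :: "'n tmat \<Rightarrow> ('n \<Rightarrow> real) set" where
  "row_space A = tspan (range (row A))"

definition col_space :: "'n tmat \<Rightarrow> ('n \<Rightarrow> real) set" where
  "col_space A = tspan (range (col A))"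

definition generates :: "('n \<Rightarrow> real) set \<Rightarrow> ('n \<Rightarrow> real) set \<Rightarrow> bool" where
  "generates G V \<longleftrightarrow> tspan G = V"

definition min_generates :: "('n \<Rightarrow> real) set \<Rightarrow> ('n \<Rightarrow> real) set \<Rightarrow> bool" where
  "min_generates G V \<longleftrightarrow> generates G V \<and> (\<forall>G'. G' \<subset> G \<longrightarrow> \<not> generates G' V)"

text \<open>Closed paths in Gamma_E: a nonempty list ps = [v0,...,v(m-1)] denotes the closed path
  v0 -> v1 -> ... -> v(m-1) -> v0; the edge j -> i has weight E i j.\<close>

definition cpath_weight :: "'n tmat \<Rightarrow> 'n list \<Rightarrow> real" where
  "cpath_weight E ps = (\<Sum>t<length ps. E (ps ! ((t + 1) mod length ps)) (ps ! t))"

definition cpath_mean :: "'n tmat \<Rightarrow> 'n list \<Rightarrow> real" where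
  "cpath_mean E ps = cpath_weight E ps / real (length ps)"

definition max_cycle_mean :: "'n tmat \<Rightarrow> real" where
  "max_cycle_mean E = (SUP ps \<in> {ps. ps \<noteq> []}. cpath_mean E ps)"

definition critical_cpath :: "'n tmat \<Rightarrow> 'n list \<Rightarrow> bool" where
  "critical_cpath E ps \<longleftrightarrow> ps \<noteq> [] \<and> cpath_mean E ps = max_cycle_mean E"

definition critical_node :: "'n tmat \<Rightarrow> 'n \<Rightarrow> bool" where
  "critical_node E v \<longleftrightarrow> (\<exists>ps. critical_cpath E ps \<and> v \<in> set ps)"

text \<open>(j, i) is a critical edge j -> i.\<close>
definition critical_edges :: "'n tmat \<Rightarrow> ('n \<times> 'n) set" where
  "critical_edges E = {(j, i). \<exists>ps. critical_cpath E ps \<and>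
      (\<exists>t < length ps. ps ! t = j \<and> ps ! ((t + 1) mod length ps) = i)}"

definition critical_class :: "'n tmat \<Rightarrow> 'n \<Rightarrow> 'n set" where
  "critical_class E v = {w. critical_node E w \<and> (v, w) \<in> (critical_edges E)\<^sup>*
                              \<and> (w, v) \<in> (critical_edges E)\<^sup>*}"

definition critical_classes :: "'n tmat \<Rightarrow> 'n set set" where
  "critical_classes E = {critical_class E v | v. critical_node E v}"

definition crit_reps :: "'n tmat \<Rightarrow> 'n set \<Rightarrow> bool" where
  "crit_reps E C \<longleftrightarrow> C \<subseteq> \<Union>(critical_classes E) \<and>
      (\<forall>K \<in> critical_classes E. \<exists>!c. c \<in> C \<and> c \<in> K)"

end

theory Submission
  imports Defs
begin


lemma tmul_ge: "A i k + B k j \<le> (A \<otimes>\<^sub>t B) i j"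
  unfolding tmul_def by (rule Max_ge) auto

lemma tmul_ex: "\<exists>k. (A \<otimes>\<^sub>t B) i j = A i k + B k j"
proof -
  have "Max (range (\<lambda>k. A i k + B k j)) \<in> range (\<lambda>k. A i k + B k j)"
    by (rule Max_in) auto
  then obtain k where "Max (range (\<lambda>k. A i k + B k j)) = A i k + B k j" by blast
  then show ?thesis unfolding tmul_def by blast
qed

lemma tmul_assoc: "(A \<otimes>\<^sub>t B) \<otimes>\<^sub>t C = A \<otimes>\<^sub>t (B \<otimes>\<^sub>t (C::('n::finite) tmat))"
proof (intro ext antisym)
  fix i j
  obtain k where k: "((A \<otimes>\<^sub>t B) \<otimes>\<^sub>t C) i j = (A \<otimes>\<^sub>t B) i k + C k j" using tmul_ex by blast
  obtain l where l: "(A \<otimes>\<^sub>t B) i k = A i l + B l k" using tmul_ex by blast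
  have "B l k + C k j \<le> (B \<otimes>\<^sub>t C) l j" by (rule tmul_ge)
  moreover have "A i l + (B \<otimes>\<^sub>t C) l j \<le> (A \<otimes>\<^sub>t (B \<otimes>\<^sub>t C)) i j" by (rule tmul_ge)
  ultimately show "((A \<otimes>\<^sub>t B) \<otimes>\<^sub>t C) i j \<le> (A \<otimes>\<^sub>t (B \<otimes>\<^sub>t C)) i j" using k l by linarith
next
  fix i j
  obtain k where k: "(A \<otimes>\<^sub>t (B \<otimes>\<^sub>t C)) i j = A i k + (B \<otimes>\<^sub>t C) k j" using tmul_ex by blast
  obtain l where l: "(B \<otimes>\<^sub>t C) k j = B k l + C l j" using tmul_ex by blast
  have "A i k + B k l \<le> (A \<otimes>\<^sub>t B) i l" by (rule tmul_ge)
  moreover have "(A \<otimes>\<^sub>t B) i l + C l j \<le> ((A \<otimes>\<^sub>t B) \<otimes>\<^sub>t C) i j" by (rule tmul_ge)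
  ultimately show "(A \<otimes>\<^sub>t (B \<otimes>\<^sub>t C)) i j \<le> ((A \<otimes>\<^sub>t B) \<otimes>\<^sub>t C) i j" using k l by linarith
qed

inductive_set span2 :: "('n \<Rightarrow> real) set \<Rightarrow> ('n \<Rightarrow> real) set" for H where
  base: "v \<in> H \<Longrightarrow> (\<lambda>k. v k + c) \<in> span2 H"
| mx: "x \<in> span2 H \<Longrightarrow> y \<in> span2 H \<Longrightarrow> (\<lambda>k. max (x k) (y k)) \<in> span2 H"

lemma span2_shift: "x \<in> span2 H \<Longrightarrow> (\<lambda>k. x k + d) \<in> span2 H"
proof (induction rule: span2.induct)
  case (base v c)
  then show ?case using span2.base[of v H "c + d"] by (simp add: add.assoc)
next
  case (mx x y)
  then show ?case using span2.mx[of "\<lambda>k. x k + d" H "\<lambda>k. y k + d"] by (simp add: max_add_distrib_left)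
qed

lemma span2_incl: "v \<in> H \<Longrightarrow> v \<in> span2 H"
  using span2.base[of v H 0] by simp

lemma span2_mono: assumes "G \<subseteq> span2 H" shows "x \<in> span2 G \<Longrightarrow> x \<in> span2 H"
proof (induction rule: span2.induct)
  case (base v c) then show ?case using span2_shift assms by blast
next
  case (mx x y) then show ?case using span2.mx by blast
qed

lemma span2_attain: "x \<in> span2 H \<Longrightarrow> \<exists>v\<in>H. \<exists>d. (\<forall>k. v k + d \<le> x k) \<and> v j0 + d = x j0"
proof (induction rule: span2.induct)
  case (base v c) then show ?case by auto
next
  case (mx x y)
  show ?case
  proof (cases "y j0 \<le> x j0")
    case True
    with mx.IH(1) obtain v d where "v \<in> H" "\<forall>k. v k + d \<le> x k" "v j0 + d = x j0" by blast
    then show ?thesis using True by (intro bexI[of _ v] exI[of _ d]) (auto simp: max_def intro: order_trans)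
  next
    case False
    with mx.IH(2) obtain v d where "v \<in> H" "\<forall>k. v k + d \<le> y k" "v j0 + d = y j0" by blast
    then show ?thesis using False by (intro bexI[of _ v] exI[of _ d]) (auto simp: max_def intro: order_trans)
  qed
qed

lemma tspan_eq: "tspan G = span2 G"
proof
  show "tspan G \<subseteq> span2 G"
  proof
    fix x assume "x \<in> tspan G"
    then obtain F where F: "finite F" "F \<noteq> {}" "F \<subseteq> G \<times> UNIV"
      and x: "x = (\<lambda>k. Max ((\<lambda>(v, c). v k + c) ` F))" unfolding tspan_def by blast
    have "F \<subseteq> G \<times> UNIV \<Longrightarrow> (\<lambda>k. Max ((\<lambda>(v, c). v k + c) ` F)) \<in> span2 G"
      using F(1,2)
    proof (induction F rule: finite_ne_induct)
      case (singleton p)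
      obtain v c where p: "p = (v, c)" by fastforce
      then show ?case using singleton span2.base[of v G c] by auto
    next
      case (insert p F)
      obtain v c where p: "p = (v, c)" by fastforce
      have e: "(\<lambda>k. Max ((\<lambda>(v, c). v k + c) ` insert p F)) =
          (\<lambda>k. max (v k + c) (Max ((\<lambda>(v, c). v k + c) ` F)))"
        using insert.hyps p by auto
      have "(\<lambda>k. v k + c) \<in> span2 G" using insert.prems p by (intro span2.base) auto
      then show ?case unfolding e using insert by (intro span2.mx) auto
    qed
    then show "x \<in> span2 G" using F x by simp
  qed
next
  show "span2 G \<subseteq> tspan G"
  proof
    fix x assume "x \<in> span2 G"
    then show "x \<in> tspan G"
    proof (induction rule: span2.induct)
      case (base v c)
      then show ?case unfolding tspan_def by (intro CollectI exI[of _ "{(v,c)}"]) auto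
    next
      case (mx x y)
      obtain F1 where F1: "finite F1" "F1 \<noteq> {}" "F1 \<subseteq> G \<times> UNIV"
        and x: "x = (\<lambda>k. Max ((\<lambda>(v, c). v k + c) ` F1))" using mx.IH(1) unfolding tspan_def by blast
      obtain F2 where F2: "finite F2" "F2 \<noteq> {}" "F2 \<subseteq> G \<times> UNIV"
        and y: "y = (\<lambda>k. Max ((\<lambda>(v, c). v k + c) ` F2))" using mx.IH(2) unfolding tspan_def by blast
      have "(\<lambda>k. max (x k) (y k)) = (\<lambda>k. Max ((\<lambda>(v, c). v k + c) ` (F1 \<union> F2)))"
        using F1 F2 x y by (simp add: image_Un Max_Un)
      then show ?case unfolding tspan_def using F1 F2 by (intro CollectI exI[of _ "F1 \<union> F2"]) auto
    qed
  qed
qed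



lemma idem_ge: "E \<otimes>\<^sub>t E = E \<Longrightarrow> E i k + E k j \<le> E i j"
  using tmul_ge[of E i k E j] by simp

lemma diag_le: "E \<otimes>\<^sub>t E = E \<Longrightarrow> E i i \<le> (0::real)"
  using idem_ge[of E i i i] by simp

lemma path_le_Suc:
  assumes idem: "E \<otimes>\<^sub>t E = E"
  shows "(\<Sum>t<Suc n. E (f (Suc t)) (f t)) \<le> E (f (Suc n)) (f 0)"
proof (induction n)
  case 0 then show ?case by simp
next
  case (Suc n)
  have "(\<Sum>t<Suc (Suc n). E (f (Suc t)) (f t)) = (\<Sum>t<Suc n. E (f (Suc t)) (f t)) + E (f (Suc (Suc n))) (f (Suc n))"
    by simp
  also have "\<dots> \<le> E (f (Suc n)) (f 0) + E (f (Suc (Suc n))) (f (Suc n))" using Suc by simp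
  also have "\<dots> \<le> E (f (Suc (Suc n))) (f 0)" using idem_ge[OF idem, of "f (Suc (Suc n))" "f (Suc n)" "f 0"] by simp
  finally show ?case .
qed

lemma path_le:
  assumes idem: "E \<otimes>\<^sub>t E = E" and "m \<ge> 1"
  shows "(\<Sum>t<m. E (f (Suc t)) (f t)) \<le> E (f m) (f 0)"
proof -
  obtain n where "m = Suc n" using assms(2) by (cases m) auto
  then show ?thesis using path_le_Suc[OF idem] by simp
qed

lemma rot_sum:
  fixes h :: "nat \<Rightarrow> real"
  assumes per: "\<And>u. h (u + m) = h u"
  shows "(\<Sum>u<m. h (u + s)) = (\<Sum>u<m. h u)"
proof (induction s)
  case 0 then show ?case by simp
next
  case (Suc s)
  have a: "(\<Sum>u<Suc m. h (u + s)) = h (0 + s) + (\<Sum>u<m. h (Suc u + s))"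
    by (rule sum.lessThan_Suc_shift)
  have b: "(\<Sum>u<Suc m. h (u + s)) = (\<Sum>u<m. h (u + s)) + h (m + s)" by simp
  have c: "h (m + s) = h s" using per[of s] by (simp add: add.commute)
  have "(\<Sum>u<m. h (u + Suc s)) = (\<Sum>u<m. h (Suc u + s))" by simp
  also have "\<dots> = (\<Sum>u<m. h (u + s))" using a b c by simp
  finally show ?case using Suc by simp
qed

lemma cw_eq:
  assumes "ps \<noteq> []"
  shows "cpath_weight E ps = (\<Sum>t<length ps. E (ps ! (Suc t mod length ps)) (ps ! (t mod length ps)))"
  unfolding cpath_weight_def by (intro sum.cong) auto

lemma cycle_le:
  assumes idem: "E \<otimes>\<^sub>t E = E" and ne: "ps \<noteq> []"
  shows "cpath_weight E ps \<le> 0"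
proof -
  define m where "m = length ps"
  define g where "g u = ps ! (u mod m)" for u
  have m1: "m \<ge> 1" using ne m_def by (cases ps) auto
  have "cpath_weight E ps = (\<Sum>t<m. E (g (Suc t)) (g t))" using cw_eq[OF ne] m_def g_def by simp
  also have "\<dots> \<le> E (g m) (g 0)" by (rule path_le[OF idem m1])
  also have "\<dots> = E (g 0) (g 0)" using g_def by simp
  also have "\<dots> \<le> 0" by (rule diag_le[OF idem])
  finally show ?thesis .
qed

lemma mcm_zero:
  assumes idem: "E \<otimes>\<^sub>t E = E" and ex: "\<exists>ps. ps \<noteq> [] \<and> cpath_weight E ps = 0"
  shows "max_cycle_mean E = 0"
proof -
  obtain ps0 where ps0: "ps0 \<noteq> []" "cpath_weight E ps0 = 0" using ex by blast
  show ?thesis unfolding max_cycle_mean_def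
  proof (rule cSup_eq_maximum)
    show "0 \<in> cpath_mean E ` {ps. ps \<noteq> []}" using ps0
      by (intro image_eqI[of _ _ ps0]) (auto simp: cpath_mean_def)
  next
    fix x assume "x \<in> cpath_mean E ` {ps. ps \<noteq> []}"
    then obtain ps where "ps \<noteq> []" "x = cpath_mean E ps" by blast
    then show "x \<le> 0" using cycle_le[OF idem] unfolding cpath_mean_def
      by (simp add: divide_nonpos_nonneg)
  qed
qed

lemma crit_iff:
  assumes idem: "E \<otimes>\<^sub>t E = E" and ex: "\<exists>ps. ps \<noteq> [] \<and> cpath_weight E ps = 0"
  shows "critical_cpath E ps \<longleftrightarrow> ps \<noteq> [] \<and> cpath_weight E ps = 0"
  unfolding critical_cpath_def mcm_zero[OF idem ex] cpath_mean_def by auto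

lemma telescope:
  fixes E :: "'n tmat"
  assumes step: "\<And>t. E i (k t) = E i (k (Suc t)) + E (k (Suc t)) (k t)"
  shows "(\<Sum>s<m. E (k (a + s + 1)) (k (a + s))) = E i (k a) - E i (k (a + m))"
proof (induction m)
  case 0 then show ?case by simp
next
  case (Suc m)
  then show ?case using step[of "a + m"] by simp
qed

lemma construct:
  fixes E :: "('n::finite) tmat"
  assumes idem: "E \<otimes>\<^sub>t E = E"
  shows "\<exists>ps k. ps \<noteq> [] \<and> cpath_weight E ps = 0 \<and> k \<in> set ps \<and> E i j = E i k + E k j"
proof -
  define nx where "nx x = (SOME l. E i x = E i l + E l x)" for x
  have nx: "E i x = E i (nx x) + E (nx x) x" for x
  proof -
    have "\<exists>l. E i x = E i l + E l x" using tmul_ex[of E E i x] idem by simp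
    then show ?thesis unfolding nx_def by (rule someI_ex)
  qed
  define k where "k t = (nx ^^ t) j" for t
  have step: "E i (k t) = E i (k (Suc t)) + E (k (Suc t)) (k t)" for t
    using nx[of "k t"] unfolding k_def by simp
  define S where "S = {1..CARD('n) + 1}"
  have "\<not> inj_on k S"
  proof
    assume "inj_on k S"
    then have "card (k ` S) = card S" by (rule card_image)
    moreover have "card (k ` S) \<le> CARD('n)" by (rule card_mono) auto
    moreover have "card S = CARD('n) + 1" unfolding S_def by simp
    ultimately show False by simp
  qed
  then obtain a b where ab: "a \<in> S" "b \<in> S" "a \<noteq> b" "k a = k b" unfolding inj_on_def by blast
  obtain a b where ab: "a \<ge> 1" "a < b" "k a = k b"
  proof (cases "a < b")
    case True then show ?thesis using ab that[of a b] unfolding S_def by auto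
  next
    case False then show ?thesis using ab that[of b a] unfolding S_def by auto
  qed
  define m where "m = b - a"
  have m1: "m \<ge> 1" and bm: "b = a + m" using ab m_def by auto
  define ps where "ps = map (\<lambda>s. k (a + s)) [0..<m]"
  have ne: "ps \<noteq> []" using m1 ps_def by auto
  have len: "length ps = m" using ps_def by simp
  have nth: "ps ! s = k (a + s)" if "s < m" for s using that ps_def by simp
  have nxt: "ps ! (Suc t mod m) = k (a + t + 1)" if "t < m" for t
  proof (cases "Suc t < m")
    case True then show ?thesis using nth by simp
  next
    case False
    then have "Suc t = m" using that by simp
    then have "a + t + 1 = b" "Suc t mod m = 0" using bm by auto
    then show ?thesis using nth[of 0] m1 ab(3) by simp
  qed
  have "cpath_weight E ps = (\<Sum>t<m. E (k (a + t + 1)) (k (a + t)))"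
    unfolding cpath_weight_def len using nth nxt by (intro sum.cong) auto
  also have "\<dots> = 0" using telescope[of E i k a m, OF step] ab(3) bm by simp
  finally have w: "cpath_weight E ps = 0" .
  have kin: "k a \<in> set ps" using nth[of 0] m1 len ne by (metis add_0_right gr_zeroI not_one_le_zero nth_mem)
  have t0: "(\<Sum>s<a. E (k (0 + s + 1)) (k (0 + s))) = E i (k 0) - E i (k (0 + a))"
    by (rule telescope[of E i k, OF step])
  have "(\<Sum>s<a. E (k (Suc s)) (k s)) \<le> E (k a) (k 0)" by (rule path_le[OF idem ab(1)])
  moreover have "k 0 = j" unfolding k_def by simp
  ultimately have "E i j \<le> E i (k a) + E (k a) j" using t0 by simp
  moreover have "E i (k a) + E (k a) j \<le> E i j" by (rule idem_ge[OF idem])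
  ultimately have "E i j = E i (k a) + E (k a) j" by simp
  then show ?thesis using ne w kin by blast
qed



lemma exzero: "E \<otimes>\<^sub>t E = (E::('n::finite) tmat) \<Longrightarrow> \<exists>ps. ps \<noteq> [] \<and> cpath_weight E ps = 0"
  using construct by blast

lemma crit_iff':
  assumes idem: "E \<otimes>\<^sub>t E = (E::('n::finite) tmat)"
  shows "critical_cpath E ps \<longleftrightarrow> ps \<noteq> [] \<and> cpath_weight E ps = 0"
  by (rule crit_iff[OF idem exzero[OF idem]])

lemma crit_edge:
  fixes E :: "('n::finite) tmat"
  assumes idem: "E \<otimes>\<^sub>t E = E" and ed: "(j, i) \<in> critical_edges E"
  shows "E i j + E j i \<ge> 0"
proof -
  obtain ps t where cp: "critical_cpath E ps" and t: "t < length ps" and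
     pj: "ps ! t = j" and pi: "ps ! ((t + 1) mod length ps) = i"
    using ed unfolding critical_edges_def by blast
  have ne: "ps \<noteq> []" and w0: "cpath_weight E ps = 0" using cp crit_iff'[OF idem, of ps] by blast+
  define m where "m = length ps"
  define g where "g u = ps ! (u mod m)" for u
  define h where "h u = E (g (Suc u)) (g u)" for u
  have per: "h (u + m) = h u" for u
  proof -
    have a: "g (u + m) = g u" unfolding g_def by simp
    have "Suc (u + m) = Suc u + m" by simp
    then have b: "g (Suc (u + m)) = g (Suc u)" unfolding g_def by (simp only: mod_add_self2)
    show ?thesis unfolding h_def using a b by simp
  qed
  have w: "cpath_weight E ps = (\<Sum>u<m. h u)" using cw_eq[OF ne, of E] unfolding h_def g_def m_def by simp
  also have "\<dots> = (\<Sum>u<m. h (u + t))" using rot_sum[of h m t] per by simp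
  finally have w2: "(\<Sum>u<m. h (u + t)) = 0" using w0 by simp
  have gt: "g t = j" "g (Suc t) = i" using t pj pi unfolding g_def m_def by auto
  have ht: "h t = E i j" using gt unfolding h_def by simp
  show ?thesis
  proof (cases "m = 1")
    case True
    then have "t = 0" using t m_def by simp
    then have "i = j" using gt True unfolding g_def by simp
    have "(\<Sum>u<m. h (u + t)) = h t" using True by simp
    then show ?thesis using w2 ht \<open>i = j\<close> by simp
  next
    case False
    have "m > 0" using ne m_def by simp
    then obtain n where mn0: "m = Suc n" using gr0_implies_Suc by blast
    then have mn: "m = Suc n" "n \<ge> 1" using False by auto
    define f where "f u = g (Suc u + t)" for u
    have "(\<Sum>u<Suc n. h (u + t)) = h (0 + t) + (\<Sum>u<n. h (Suc u + t))"
      by (rule sum.lessThan_Suc_shift)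
    moreover have "(\<Sum>u<n. h (Suc u + t)) = (\<Sum>u<n. E (f (Suc u)) (f u))"
      unfolding f_def h_def by simp
    moreover have "(\<Sum>u<n. E (f (Suc u)) (f u)) \<le> E (f n) (f 0)" by (rule path_le[OF idem mn(2)])
    moreover have "f 0 = i" using gt f_def by simp
    moreover have "f n = g t"
    proof -
      have "Suc n + t = t + m" using mn by simp
      then show ?thesis unfolding f_def g_def by (simp only: mod_add_self2)
    qed
    ultimately show ?thesis using w2 ht gt mn(1) by simp
  qed
qed

lemma crit_node_diag:
  fixes E :: "('n::finite) tmat"
  assumes idem: "E \<otimes>\<^sub>t E = E" and cn: "critical_node E v"
  shows "E v v = 0"
proof -
  obtain ps where cp: "critical_cpath E ps" and v: "v \<in> set ps" using cn unfolding critical_node_def by blast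
  then obtain t where t: "t < length ps" "ps ! t = v" by (auto simp: in_set_conv_nth)
  define w where "w = ps ! ((t + 1) mod length ps)"
  have "(v, w) \<in> critical_edges E" unfolding critical_edges_def w_def using cp t by blast
  then have "E w v + E v w \<ge> 0" by (rule crit_edge[OF idem])
  moreover have "E v w + E w v \<le> E v v" by (rule idem_ge[OF idem])
  ultimately show ?thesis using diag_le[OF idem, of v] by simp
qed

lemma crit_rtr:
  fixes E :: "('n::finite) tmat"
  assumes idem: "E \<otimes>\<^sub>t E = E" and r: "(x, y) \<in> (critical_edges E)\<^sup>*"
  shows "x = y \<or> E x y + E y x \<ge> 0"
  using r
proof (induction rule: rtrancl_induct)
  case base then show ?case by simp
next
  case (step y z)
  have e: "E z y + E y z \<ge> 0" by (rule crit_edge[OF idem step(2)])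
  show ?case
  proof (cases "x = y")
    case True then show ?thesis using e by simp
  next
    case False
    then have "E x y + E y x \<ge> 0" using step(3) by simp
    moreover have "E x y + E y z \<le> E x z" "E z y + E y x \<le> E z x" using idem_ge[OF idem] by auto
    ultimately show ?thesis using e by simp
  qed
qed

lemma K1:
  fixes E :: "('n::finite) tmat"
  assumes idem: "E \<otimes>\<^sub>t E = E" and cr: "crit_reps E C"
  shows "\<exists>c\<in>C. E i j \<le> E i c + E c j"
proof -
  obtain ps k where ps: "ps \<noteq> []" "cpath_weight E ps = 0" "k \<in> set ps" "E i j = E i k + E k j"
    using construct[OF idem] by blast
  have ck: "critical_node E k" unfolding critical_node_def using ps crit_iff'[OF idem, of ps] by blast
  then have "critical_class E k \<in> critical_classes E" unfolding critical_classes_def by blast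
  then obtain c where c: "c \<in> C" "c \<in> critical_class E k" using cr unfolding crit_reps_def by blast
  then have "(k, c) \<in> (critical_edges E)\<^sup>*" unfolding critical_class_def by blast
  then have "k = c \<or> E k c + E c k \<ge> 0" by (rule crit_rtr[OF idem])
  moreover have "E i k + E k c \<le> E i c" "E c k + E k j \<le> E c j" using idem_ge[OF idem] by auto
  ultimately have "E i j \<le> E i c + E c j" using ps(4) by auto
  then show ?thesis using c by blast
qed

lemma K2:
  fixes E :: "('n::finite) tmat"
  assumes idem: "E \<otimes>\<^sub>t E = E" and cr: "crit_reps E C" and c: "c \<in> C"
  shows "E c c = 0"
proof -
  obtain K where "K \<in> critical_classes E" "c \<in> K" using cr c unfolding crit_reps_def by blast
  then have "critical_node E c" unfolding critical_classes_def critical_class_def by blast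
  then show ?thesis by (rule crit_node_diag[OF idem])
qed

lemma K3:
  fixes E :: "('n::finite) tmat"
  assumes idem: "E \<otimes>\<^sub>t E = E" and cr: "crit_reps E C" and c: "c \<in> C" "c' \<in> C" "c \<noteq> c'"
  shows "E c c' + E c' c < 0"
proof (rule ccontr)
  assume "\<not> E c c' + E c' c < 0"
  then have ge: "E c c' + E c' c \<ge> 0" by simp
  define ps where "ps = [c, c']"
  have "cpath_weight E ps = E c' c + E c c'"
    unfolding cpath_weight_def ps_def by (simp add: numeral_2_eq_2)
  moreover have "cpath_weight E ps \<le> 0" using cycle_le[OF idem] ps_def by simp
  ultimately have "cpath_weight E ps = 0" using ge by simp
  then have cp: "critical_cpath E ps" using crit_iff'[OF idem, of ps] ps_def by simp
  have e1: "(c, c') \<in> critical_edges E" unfolding critical_edges_def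
    using cp by (intro CollectI case_prodI exI[of _ ps]) (auto simp: ps_def intro: exI[of _ 0])
  have e2: "(c', c) \<in> critical_edges E" unfolding critical_edges_def
    using cp by (intro CollectI case_prodI exI[of _ ps]) (auto simp: ps_def intro: exI[of _ 1])
  have n1: "critical_node E c" "critical_node E c'" unfolding critical_node_def using cp ps_def by auto
  have in1: "c \<in> critical_class E c" "c' \<in> critical_class E c"
    unfolding critical_class_def using n1 e1 e2 by auto
  have "critical_class E c \<in> critical_classes E" unfolding critical_classes_def using n1 by blast
  then have "\<exists>!x. x \<in> C \<and> x \<in> critical_class E c" using cr unfolding crit_reps_def by blast
  then show False using in1 c by blast
qed



lemma max_span:
  assumes "finite S" "S \<noteq> {}" "\<forall>c\<in>S. v c \<in> H"
  shows "(\<lambda>j. Max ((\<lambda>c. v c j + w c) ` S)) \<in> span2 H"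
  using assms
proof (induction S rule: finite_ne_induct)
  case (singleton c)
  then show ?case using span2.base[of "v c" H "w c"] by simp
next
  case (insert c S)
  have e: "(\<lambda>j. Max ((\<lambda>c. v c j + w c) ` insert c S)) =
      (\<lambda>j. max (v c j + w c) (Max ((\<lambda>c. v c j + w c) ` S)))" using insert.hyps by simp
  show ?case unfolding e using insert span2.base[of "v c" H "w c"] by (intro span2.mx) auto
qed

lemma row_gen:
  fixes A E :: "('n::finite) tmat"
  assumes idem: "E \<otimes>\<^sub>t E = E" and K1: "\<forall>i j. \<exists>c\<in>C. E i j \<le> E i c + E c j"
    and AEA: "E \<otimes>\<^sub>t A = A"
  shows "generates (row A ` C) (row_space A)"
proof -
  have fC: "finite C" by simp
  have neC: "C \<noteq> {}" using K1 by blast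
  have eq: "A i j = Max ((\<lambda>c. row A c j + E i c) ` C)" for i j
  proof (rule sym, rule Max_eqI)
    show "finite ((\<lambda>c. row A c j + E i c) ` C)" by simp
  next
    fix y assume "y \<in> (\<lambda>c. row A c j + E i c) ` C"
    then obtain c where "y = A c j + E i c" unfolding row_def by auto
    then show "y \<le> A i j" using tmul_ge[of E i c A j] AEA by simp
  next
    obtain k where k: "A i j = E i k + A k j" using tmul_ex[of E A i j] AEA by auto
    obtain c where c: "c \<in> C" "E i k \<le> E i c + E c k" using K1 by blast
    have "E c k + A k j \<le> A c j" using tmul_ge[of E c k A j] AEA by simp
    moreover have "E i c + A c j \<le> A i j" using tmul_ge[of E i c A j] AEA by simp
    ultimately have "A i j = A c j + E i c" using k c by linarith
    then show "A i j \<in> (\<lambda>c. row A c j + E i c) ` C" using c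
      by (intro image_eqI[of _ _ c]) (simp_all add: row_def)
  qed
  have r: "row A i \<in> span2 (row A ` C)" for i
  proof -
    have "row A i j = Max ((\<lambda>c. row A c j + E i c) ` C)" for j
      using eq[of i j] unfolding row_def[of A i] by simp
    then have "row A i = (\<lambda>j. Max ((\<lambda>c. row A c j + E i c) ` C))" by (rule ext)
    also have "\<dots> \<in> span2 (row A ` C)" using fC neC by (intro max_span) auto
    finally show ?thesis .
  qed
  have "span2 (row A ` C) = span2 (range (row A))"
  proof
    show "span2 (row A ` C) \<subseteq> span2 (range (row A))"
      using span2_mono[of "row A ` C" "range (row A)"] span2_incl by blast
    show "span2 (range (row A)) \<subseteq> span2 (row A ` C)"
      using span2_mono[of "range (row A)" "row A ` C"] r by blast
  qed
  then show ?thesis unfolding generates_def row_space_def tspan_eq .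
qed

lemma row_min:
  fixes A E :: "('n::finite) tmat"
  assumes idem: "E \<otimes>\<^sub>t E = E" and K1: "\<forall>i j. \<exists>c\<in>C. E i j \<le> E i c + E c j"
    and K2: "\<forall>c\<in>C. E c c = 0" and K3: "\<forall>c\<in>C. \<forall>c'\<in>C. c \<noteq> c' \<longrightarrow> E c c' + E c' c < 0"
    and AEA: "E \<otimes>\<^sub>t A = A" and EA: "E = A \<or> (\<exists>Y. E = A \<otimes>\<^sub>t Y)"
  shows "min_generates (row A ` C) (row_space A)"
  unfolding min_generates_def
proof (intro conjI allI impI)
  show gen: "generates (row A ` C) (row_space A)" by (rule row_gen[OF idem K1 AEA])
  fix G' assume sub: "G' \<subset> row A ` C"
  show "\<not> generates G' (row_space A)"
  proof
    assume g': "generates G' (row_space A)"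
    obtain c where c: "c \<in> C" "row A c \<notin> G'" using sub by blast
    have "row A c \<in> span2 (row A ` C)" using c by (intro span2_incl) auto
    then have inG: "row A c \<in> span2 G'" using gen g' unfolding generates_def tspan_eq by simp
    have att: "\<exists>c'\<in>C. c' \<noteq> c \<and> (\<exists>d. (\<forall>k. A c' k + d \<le> A c k) \<and> A c' j0 + d = A c j0)" for j0
    proof -
      obtain v d where v: "v \<in> G'" "\<forall>k. v k + d \<le> row A c k" "v j0 + d = row A c j0"
        using span2_attain[OF inG, of j0] by blast
      obtain c' where c': "c' \<in> C" "v = row A c'" using v(1) sub by blast
      have "c' \<noteq> c" using c' v(1) c(2) by blast
      then show ?thesis using c' v unfolding row_def by auto
    qed
    have "\<exists>c'\<in>C. c' \<noteq> c \<and> (\<exists>d. (\<forall>k. E c' k + d \<le> E c k) \<and> E c' c + d \<ge> E c c)"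
      using EA
    proof
      assume "E = A"
      then show ?thesis using att[of c] by force
    next
      assume "\<exists>Y. E = A \<otimes>\<^sub>t Y"
      then obtain Y where Y: "E = A \<otimes>\<^sub>t Y" by blast
      obtain l where l: "E c c = A c l + Y l c" using tmul_ex[of A Y c c] Y by auto
      obtain c' d where c': "c' \<in> C" "c' \<noteq> c" "\<forall>k. A c' k + d \<le> A c k" "A c' l + d = A c l"
        using att[of l] by blast
      have "E c' k + d \<le> E c k" for k
      proof -
        obtain l' where "E c' k = A c' l' + Y l' k" using tmul_ex[of A Y c' k] Y by auto
        moreover have "A c l' + Y l' k \<le> E c k" using tmul_ge[of A c l' Y k] Y by simp
        ultimately show ?thesis using c'(3)[rule_format, of l'] by simp
      qed
      moreover have "A c' l + Y l c \<le> E c' c" using tmul_ge[of A c' l Y c] Y by simp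
      ultimately show ?thesis using c' l by (intro bexI[of _ c'] conjI exI[of _ d]) auto
    qed
    then obtain c' d where c': "c' \<in> C" "c' \<noteq> c" "\<forall>k. E c' k + d \<le> E c k" "E c' c + d \<ge> E c c"
      by blast
    have "E c' c' + d \<le> E c c'" using c'(3) by blast
    then have "E c c' + E c' c \<ge> 0" using c'(4) K2 c(1) c'(1) by simp
    then show False using K3 c(1) c'(1,2) by force
  qed
qed

definition tr :: "'n tmat \<Rightarrow> 'n tmat" where "tr A = (\<lambda>i j. A j i)"

lemma tr_mul: "tr (A \<otimes>\<^sub>t B) = tr B \<otimes>\<^sub>t tr (A::('n::finite) tmat)"
  unfolding tr_def tmul_def by (simp add: add.commute)

lemma tr_tr: "tr (tr A) = A" unfolding tr_def by simp

lemma col_tr: "col A = row (tr A)" unfolding col_def row_def tr_def by simp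

lemma col_space_tr: "col_space A = row_space (tr A)"
  unfolding col_space_def row_space_def col_tr by simp

theorem corollary5p3:
  fixes A E :: "('n::finite) tmat" and C :: "'n set"
  assumes "idempotent_t E" and "crit_reps E C"
  shows "(le_R A E \<longrightarrow> generates (row A ` C) (row_space A))
       \<and> (Rrel A E \<longrightarrow> min_generates (row A ` C) (row_space A))
       \<and> (le_L A E \<longrightarrow> generates (col A ` C) (col_space A))
       \<and> (Lrel A E \<longrightarrow> min_generates (col A ` C) (col_space A))"
proof -
  have idem: "E \<otimes>\<^sub>t E = E" using assms(1) unfolding idempotent_t_def .
  have k1: "\<forall>i j. \<exists>c\<in>C. E i j \<le> E i c + E c j" using K1[OF idem assms(2)] by blast
  have k2: "\<forall>c\<in>C. E c c = 0" using K2[OF idem assms(2)] by blast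
  have k3: "\<forall>c\<in>C. \<forall>c'\<in>C. c \<noteq> c' \<longrightarrow> E c c' + E c' c < 0" using K3[OF idem assms(2)] by blast
  have idemT: "tr E \<otimes>\<^sub>t tr E = tr E" using tr_mul[of E E] idem by simp
  have k1T: "\<forall>i j. \<exists>c\<in>C. tr E i j \<le> tr E i c + tr E c j"
  proof (intro allI)
    fix i j obtain c where "c \<in> C" "E j i \<le> E j c + E c i" using k1 by blast
    then have "\<exists>c\<in>C. E j i \<le> E c i + E j c" by (metis add.commute)
    then show "\<exists>c\<in>C. tr E i j \<le> tr E i c + tr E c j" unfolding tr_def by simp
  qed
  have k2T: "\<forall>c\<in>C. tr E c c = 0" using k2 unfolding tr_def by simp
  have k3T: "\<forall>c\<in>C. \<forall>c'\<in>C. c \<noteq> c' \<longrightarrow> tr E c c' + tr E c' c < 0" using k3 unfolding tr_def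
    by (simp add: add.commute)
  have R1: "A \<in> right_ideal1 E \<Longrightarrow> E \<otimes>\<^sub>t A = A"
  proof -
    assume "A \<in> right_ideal1 E"
    then have "A = E \<or> (\<exists>X. A = E \<otimes>\<^sub>t X)" unfolding right_ideal1_def by blast
    then show "E \<otimes>\<^sub>t A = A"
    proof
      assume "A = E" then show ?thesis using idem by simp
    next
      assume "\<exists>X. A = E \<otimes>\<^sub>t X"
      then obtain X where "A = E \<otimes>\<^sub>t X" by blast
      then show ?thesis using idem tmul_assoc[of E E X, symmetric] by simp
    qed
  qed
  have L1: "A \<in> left_ideal1 E \<Longrightarrow> tr E \<otimes>\<^sub>t tr A = tr A"
  proof -
    assume "A \<in> left_ideal1 E"
    then have "A = E \<or> (\<exists>X. A = X \<otimes>\<^sub>t E)" unfolding left_ideal1_def by blast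
    then have "A \<otimes>\<^sub>t E = A"
    proof
      assume "A = E" then show ?thesis using idem by simp
    next
      assume "\<exists>X. A = X \<otimes>\<^sub>t E"
      then obtain X where "A = X \<otimes>\<^sub>t E" by blast
      then show ?thesis using idem tmul_assoc[of X E E] by simp
    qed
    then show ?thesis using tr_mul[of A E] by simp
  qed
  have P1: "le_R A E \<longrightarrow> generates (row A ` C) (row_space A)"
  proof
    assume "le_R A E"
    then have "A \<in> right_ideal1 E" unfolding le_R_def right_ideal1_def by blast
    then show "generates (row A ` C) (row_space A)" using row_gen[OF idem k1 R1] by blast
  qed
  have P2: "Rrel A E \<longrightarrow> min_generates (row A ` C) (row_space A)"
  proof
    assume r: "Rrel A E"
    then have "A \<in> right_ideal1 E" unfolding Rrel_def right_ideal1_def by blast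
    moreover have "E \<in> right_ideal1 A" using r unfolding Rrel_def right_ideal1_def by blast
    then have "E = A \<or> (\<exists>Y. E = A \<otimes>\<^sub>t Y)" unfolding right_ideal1_def by blast
    ultimately show "min_generates (row A ` C) (row_space A)"
      using row_min[OF idem k1 k2 k3 R1] by blast
  qed
  have P3: "le_L A E \<longrightarrow> generates (col A ` C) (col_space A)"
  proof
    assume "le_L A E"
    then have "A \<in> left_ideal1 E" unfolding le_L_def left_ideal1_def by blast
    then show "generates (col A ` C) (col_space A)"
      unfolding col_tr col_space_tr using row_gen[OF idemT k1T L1] by blast
  qed
  have P4: "Lrel A E \<longrightarrow> min_generates (col A ` C) (col_space A)"
  proof
    assume r: "Lrel A E"
    then have a: "A \<in> left_ideal1 E" unfolding Lrel_def left_ideal1_def by blast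
    have "E \<in> left_ideal1 A" using r unfolding Lrel_def left_ideal1_def by blast
    then have "E = A \<or> (\<exists>Y. E = Y \<otimes>\<^sub>t A)" unfolding left_ideal1_def by blast
    then have "tr E = tr A \<or> (\<exists>Y. tr E = tr A \<otimes>\<^sub>t Y)" using tr_mul by metis
    then show "min_generates (col A ` C) (col_space A)"
      unfolding col_tr col_space_tr using row_min[OF idemT k1T k2T k3T L1[OF a]] by blast
  qed
  show ?thesis using P1 P2 P3 P4 by blast
qed


end
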